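(* For each positive integer $n$, let $A_n=\{a_{0n},\dots,a_{nn}\}$ with $(a_{0n},\dots,a_{nn})\in[0,1]^{n+1}$ a minimizer of $$(x_0,\dots,x_n)\mapsto \max_{p\in[0,1]}\sum_{k=0}^n\binom{n}{k}p^k(1-p)^{n-k}|p-x_k|$$ over $[0,1]^{n+1}$. Then the normalized counting measures $\frac{1}{n+1}\sum_{j=0}^n\delta_{a_{jn}}$ converge weak$^*$ to Lebesgue measure $dx$ on $[0,1]$ as $n\to\infty$.
   Context: $\delta_x$ denotes the unit point mass at $x$. Weak$^*$ convergence of measures $\mu_n\to\mu$ on $[0,1]$ means $\int g\,d\mu_n\to\int g\,d\mu$ for all $g\in C[0,1]$. *)

theory Defs
  imports "HOL-Analysis.Analysis"
begin

text \<open>The sum is continuous in p, so the supremum over the compact [0,1] is a max.\<close>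
definition bern_err :: "nat \<Rightarrow> (nat \<Rightarrow> real) \<Rightarrow> real" where
  "bern_err n x = (SUP p\<in>{0..1::real}.
      (\<Sum>k=0..n. real (n choose k) * p ^ k * (1 - p) ^ (n - k) * \<bar>p - x k\<bar>))"

definition is_minimizer :: "nat \<Rightarrow> (nat \<Rightarrow> real) \<Rightarrow> bool" where
  "is_minimizer n x \<longleftrightarrow> (\<forall>k\<le>n. x k \<in> {0..1}) \<and>
     (\<forall>y. (\<forall>k\<le>n. y k \<in> {0..1}) \<longrightarrow> bern_err n x \<le> bern_err n y)"

end

theory Submission
  imports Defs
begin


lemma Bern_deriv:
  assumes "k < n"
  shows "((\<lambda>x. real (n choose k) * x^(Suc k) * (1-x)^(n-k) / real (Suc k)) has_real_derivative
          (Bernstein n k x - Bernstein n (Suc k) x)) (at x)"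
proof -
  have c: "real (n choose k) * real (n - k) = real (n choose Suc k) * real (Suc k)"
  proof -
    have "(n - k) * (n choose k) = Suc k * (n choose Suc k)"
      using binomial_absorb_comp[of n k] binomial_absorption[of k n] by simp
    then show ?thesis by (metis of_nat_mult mult.commute)
  qed
  have e: "n - k = Suc (n - Suc k)" using assms by simp
  show ?thesis
    apply (rule derivative_eq_intros refl | simp)+
    apply (simp add: Bernstein_def e)
    using c apply (simp add: field_simps e)
    apply (drule arg_cong[where f="\<lambda>t. x * x^k * (1-x)^(n - Suc k) * t"])
    apply (simp add: algebra_simps)
    done
qed


lemma Bern_integrable: "Bernstein n k integrable_on {0..1}"
  unfolding Bernstein_def
  by (intro integrable_continuous_real continuous_intros)

lemma Bern_int_step:
  assumes "k < n"
  shows "integral {0..1} (Bernstein n k) = integral {0..1} (Bernstein n (Suc k))"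
proof -
  let ?f = "\<lambda>x. real (n choose k) * x^(Suc k) * (1-x)^(n-k) / real (Suc k)"
  have "((\<lambda>x. Bernstein n k x - Bernstein n (Suc k) x) has_integral (?f 1 - ?f 0)) {0..1}"
    apply (rule fundamental_theorem_of_calculus)
     apply simp
    using Bern_deriv[OF assms]
    by (simp add: has_real_derivative_iff_has_vector_derivative has_vector_derivative_at_within)
  moreover have "?f 1 - ?f 0 = 0" using assms by simp
  ultimately have "integral {0..1} (\<lambda>x. Bernstein n k x - Bernstein n (Suc k) x) = 0"
    by (simp add: integral_unique)
  then show ?thesis
    using integral_diff[OF Bern_integrable Bern_integrable, of n k n "Suc k"] by simp
qed

lemma Bern_int0: "k \<le> n \<Longrightarrow> integral {0..1} (Bernstein n k) = integral {0..1} (Bernstein n 0)"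
proof (induction k)
  case 0 then show ?case by simp
next
  case (Suc k) then show ?case using Bern_int_step[of k n] by simp
qed

lemma Bern_int: 
  assumes "k \<le> n" shows "integral {0..1} (Bernstein n k) = 1 / real (Suc n)"
proof -
  have "integral {0..1} (\<lambda>x. \<Sum>j\<le>n. Bernstein n j x) = (\<Sum>j\<le>n. integral {0..1} (Bernstein n j))"
    by (rule integral_sum) (auto intro: Bern_integrable)
  also have "\<dots> = (\<Sum>j\<le>n. integral {0..1} (Bernstein n 0))"
    by (rule sum.cong) (auto intro: Bern_int0)
  finally have "1 = real (Suc n) * integral {0..1} (Bernstein n 0)" by simp
  then show ?thesis using Bern_int0[OF assms] by (simp add: field_simps)
qed

lemma sum_Bern_var: "n > 0 \<Longrightarrow> (\<Sum>k\<le>n. (x - k/n)\<^sup>2 * Bernstein n k x) = x * (1 - x) / n"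
proof -
  assume "n > 0" then have False: "n \<noteq> 0" by simp
  have *: "(x - k/n)\<^sup>2 * B = x\<^sup>2 * B - 2*x/n * (real k * B) + 1/n^2 * (real k * (real k - 1) * B) + 1/n^2 * (real k * B)"
    for k B using False by (simp add: field_simps power2_eq_square)
  have "(\<Sum>k\<le>n. (x - k/n)\<^sup>2 * Bernstein n k x) =
     x\<^sup>2 * (\<Sum>k\<le>n. Bernstein n k x) - 2*x/n * (\<Sum>k\<le>n. real k * Bernstein n k x)
      + 1/n^2 * (\<Sum>k\<le>n. real k * (real k - 1) * Bernstein n k x) + 1/n^2 * (\<Sum>k\<le>n. real k * Bernstein n k x)"
    by (simp only: * sum.distrib sum_subtractf sum_distrib_left)
  also have "\<dots> = x * (1 - x) / n" using False
    apply (simp only: sum_Bernstein sum_k_Bernstein sum_kk_Bernstein)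
    by (simp add: field_simps power2_eq_square)
  finally show ?thesis .
qed


lemma bern_err_alt: "bern_err n x = (SUP p\<in>{0..1::real}. (\<Sum>k\<le>n. Bernstein n k p * \<bar>p - x k\<bar>))"
  unfolding bern_err_def Bernstein_def atLeast0AtMost ..

lemma ref_pointwise:
  assumes n: "n \<ge> 1" and p: "0 \<le> p" "p \<le> 1"
  shows "(\<Sum>k\<le>n. Bernstein n k p * \<bar>p - real k / real n\<bar>) \<le> 1 / sqrt n"
proof -
  define s where "s = sqrt (real n)"
  have s0: "s > 0" using n by (simp add: s_def)
  have ss: "s * s = real n" using n by (simp add: s_def)
  have ab: "\<bar>t\<bar> \<le> (s * t\<^sup>2 + 1 / s) / 2" for t
  proof -
    have "0 \<le> (s * \<bar>t\<bar> - 1)\<^sup>2 / (2 * s)" using s0 by simp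
    also have "(s * \<bar>t\<bar> - 1)\<^sup>2 / (2 * s) = (s * t\<^sup>2 + 1 / s) / 2 - \<bar>t\<bar>"
      using s0 by (simp add: field_simps power2_eq_square)
    finally show ?thesis by simp
  qed
  have "(\<Sum>k\<le>n. Bernstein n k p * \<bar>p - real k / real n\<bar>) \<le>
        (\<Sum>k\<le>n. Bernstein n k p * ((s * (p - real k / real n)\<^sup>2 + 1 / s) / 2))"
    by (rule sum_mono, rule mult_left_mono[OF ab]) (use p in \<open>simp add: Bernstein_nonneg\<close>)
  also have "\<dots> = (s * (\<Sum>k\<le>n. (p - real k / real n)\<^sup>2 * Bernstein n k p) + 1 / s * (\<Sum>k\<le>n. Bernstein n k p)) / 2"
  proof -
    have "Bernstein n k p * ((s * (p - real k / real n)\<^sup>2 + 1 / s) / 2) =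
      (s * ((p - real k / real n)\<^sup>2 * Bernstein n k p) + 1 / s * Bernstein n k p) / 2" for k
      by (simp add: algebra_simps)
    then show ?thesis
      by (simp only: sum_divide_distrib[symmetric] sum.distrib sum_distrib_left)
  qed
  also have "\<dots> = (s * (p * (1 - p) / n) + 1 / s) / 2"
    using n by (simp add: sum_Bern_var)
  also have "\<dots> \<le> (s * (1 / n) + 1 / s) / 2"
  proof -
    have "p * (1 - p) \<le> 1" using p mult_le_one[of p "1-p"] by simp
    then have "p * (1 - p) / n \<le> 1 / n" using n by (simp add: divide_right_mono)
    then have "s * (p * (1 - p) / n) \<le> s * (1 / n)" using s0 by (intro mult_left_mono) auto
    then show ?thesis by (simp only: divide_right_mono add_right_mono)
  qed
  also have "\<dots> = 1 / s" using s0 ss n by (simp add: field_simps)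
  finally show ?thesis by (simp add: s_def)
qed

lemma err_ref: "n \<ge> 1 \<Longrightarrow> bern_err n (\<lambda>k. real k / real n) \<le> 1 / sqrt n"
  unfolding bern_err_alt
  by (rule cSUP_least) (auto intro: ref_pointwise)

lemma err_upper:
  assumes x: "\<forall>k\<le>n. x k \<in> {0..1}" and p: "p \<in> {0..1}"
  shows "(\<Sum>k\<le>n. Bernstein n k p * \<bar>p - x k\<bar>) \<le> bern_err n x"
  unfolding bern_err_alt
proof (rule cSUP_upper[OF p])
  show "bdd_above ((\<lambda>p. \<Sum>k\<le>n. Bernstein n k p * \<bar>p - x k\<bar>) ` {0..1})"
  proof (rule bdd_aboveI2)
    fix q :: real assume q: "q \<in> {0..1}"
    have "(\<Sum>k\<le>n. Bernstein n k q * \<bar>q - x k\<bar>) \<le> (\<Sum>k\<le>n. Bernstein n k q * 1)"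
      apply (rule sum_mono, rule mult_left_mono)
      using x q by (auto simp: Bernstein_nonneg abs_le_iff)
    then show "(\<Sum>k\<le>n. Bernstein n k q * \<bar>q - x k\<bar>) \<le> 1" by simp
  qed
qed

lemma minimizer_bound:
  assumes n: "n \<ge> 1" and m: "is_minimizer n x" and p: "p \<in> {0..1}"
  shows "(\<Sum>k\<le>n. Bernstein n k p * \<bar>p - x k\<bar>) \<le> 1 / sqrt n"
proof -
  have x: "\<forall>k\<le>n. x k \<in> {0..1}" using m by (simp add: is_minimizer_def)
  have "\<forall>k\<le>n. real k / real n \<in> {0..1}" using n by auto
  then have "bern_err n x \<le> bern_err n (\<lambda>k. real k / real n)"
    using m by (simp add: is_minimizer_def)
  then show ?thesis using err_upper[OF x p] err_ref[OF n] by linarith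
qed


lemma Bern_integrable_c: "(\<lambda>x. c * Bernstein n k x) integrable_on {0..1}"
  unfolding Bernstein_def
  by (intro integrable_continuous_real continuous_intros)

theorem corollary3p5:
  fixes a :: "nat \<Rightarrow> nat \<Rightarrow> real"
  assumes "\<And>n. n \<ge> 1 \<Longrightarrow> is_minimizer n (a n)"
  shows "\<And>g. continuous_on {0..1} g \<Longrightarrow>
    (\<lambda>n. (\<Sum>j=0..n. g (a n j)) / real (n + 1)) \<longlonglongrightarrow> integral {0..1::real} g"
proof -
  fix g :: "real \<Rightarrow> real"
  assume contg: "continuous_on {0..1} g"
  have "bounded (g ` {0..1})"
    using compact_continuous_image compact_imp_bounded contg by blast
  then obtain M where M: "\<And>x. 0 \<le> x \<Longrightarrow> x \<le> 1 \<Longrightarrow> \<bar>g x\<bar> \<le> M"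
    by (force simp add: bounded_iff)
  then have M0: "0 \<le> M" by force
  have ucont: "uniformly_continuous_on {0..1} g"
    using compact_uniformly_continuous contg by blast
  have gint: "g integrable_on {0..1}" by (rule integrable_continuous_real[OF contg])
  show "(\<lambda>n. (\<Sum>j=0..n. g (a n j)) / real (n + 1)) \<longlonglongrightarrow> integral {0..1::real} g"
  proof (rule LIMSEQ_I)
    fix r :: real assume r: "0 < r"
    obtain d where d: "d > 0" "\<And>x x'. \<lbrakk> x \<in> {0..1}; x' \<in> {0..1}; \<bar>x' - x\<bar> < d\<rbrakk> \<Longrightarrow> \<bar>g x' - g x\<bar> < r/2"
      apply (rule uniformly_continuous_onE [OF ucont, where \<epsilon> = "r/2"])
      using r by (auto simp: dist_norm)
    have key: "\<bar>g x' - g x\<bar> \<le> r/2 + 2*M/d * \<bar>x - x'\<bar>" if xx: "x \<in> {0..1}" "x' \<in> {0..1}" for x x'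
    proof (cases "\<bar>x' - x\<bar> < d")
      case True
      have "0 \<le> 2*M/d * \<bar>x - x'\<bar>" using M0 d by simp
      then show ?thesis using d(2)[OF xx True] by linarith
    next
      case False
      have "2*M \<le> 2*M/d * \<bar>x - x'\<bar>"
      proof -
        have "2*M/d * \<bar>x - x'\<bar> = 2*M * (\<bar>x - x'\<bar> / d)" by simp
        moreover have "1 \<le> \<bar>x - x'\<bar> / d" using False d by (simp add: abs_minus_commute)
        ultimately show ?thesis using M0 by (metis mult_left_mono mult.right_neutral mult_nonneg_nonneg zero_le_numeral)
      qed
      moreover have "\<bar>g x' - g x\<bar> \<le> 2*M" using M xx by (smt (verit) atLeastAtMost_iff)
      ultimately show ?thesis using r by linarith
    qed
    obtain N :: nat where N: "(4*M/(d*r))\<^sup>2 < real N" using reals_Archimedean2 by blast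
    show "\<exists>no. \<forall>n\<ge>no. norm ((\<Sum>j=0..n. g (a n j)) / real (n + 1) - integral {0..1} g) < r"
    proof (intro exI allI impI)
      fix n assume nN: "max N 1 \<le> n"
      then have n1: "n \<ge> 1" by simp
      have mn: "is_minimizer n (a n)" using assms n1 by simp
      have xin: "\<forall>k\<le>n. a n k \<in> {0..1}" using mn by (simp add: is_minimizer_def)
      have sq: "4*M/(d*r) < sqrt n"
      proof -
        have "4*M/(d*r) \<le> sqrt ((4*M/(d*r))\<^sup>2)" by (simp only: real_sqrt_abs abs_ge_self)
        also have "\<dots> < sqrt (real N)" using N by (simp only: real_sqrt_less_iff)
        also have "\<dots> \<le> sqrt n" using nN by simp
        finally show ?thesis .
      qed
      have sn0: "sqrt n > 0" using n1 by simp
      have small: "2*M/d * (1 / sqrt n) < r/2"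
      proof -
        have "4*M < sqrt n * (d*r)" using sq d r by (simp add: pos_divide_less_eq)
        then show ?thesis using sn0 d by (simp add: field_simps)
      qed
      define F where "F p = (\<Sum>j\<le>n. g (a n j) * Bernstein n j p)" for p
      have Fint: "F integrable_on {0..1}"
        unfolding F_def by (intro integrable_sum Bern_integrable_c) simp
      have avg: "(\<Sum>j=0..n. g (a n j)) / real (n + 1) = integral {0..1} F"
      proof -
        have "integral {0..1} F = (\<Sum>j\<le>n. integral {0..1} (\<lambda>p. g (a n j) * Bernstein n j p))"
          unfolding F_def by (rule integral_sum) (auto intro: Bern_integrable_c)
        also have "\<dots> = (\<Sum>j\<le>n. g (a n j) * (1 / real (Suc n)))"
          by (rule sum.cong) (auto simp: Bern_int)
        also have "\<dots> = (\<Sum>j=0..n. g (a n j)) / real (n + 1)"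
          by (simp add: sum_divide_distrib atLeast0AtMost)
        finally show ?thesis by simp
      qed
      have pw: "norm (F p - g p) \<le> r/2 + 2*M/d * (1 / sqrt n)" if p: "p \<in> {0..1}" for p
      proof -
        have "F p - g p = (\<Sum>j\<le>n. Bernstein n j p * (g (a n j) - g p))"
          unfolding F_def using sum_Bernstein[of n p]
          by (simp add: algebra_simps sum_subtractf sum_distrib_left[symmetric])
        then have "norm (F p - g p) \<le> (\<Sum>j\<le>n. \<bar>Bernstein n j p * (g (a n j) - g p)\<bar>)"
          by (simp add: sum_abs)
        also have "\<dots> \<le> (\<Sum>j\<le>n. Bernstein n j p * (r/2 + 2*M/d * \<bar>p - a n j\<bar>))"
        proof (rule sum_mono)
          fix j assume j: "j \<in> {..n}"
          have B0: "0 \<le> Bernstein n j p" using p by (simp add: Bernstein_nonneg)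
          have "\<bar>g (a n j) - g p\<bar> \<le> r/2 + 2*M/d * \<bar>p - a n j\<bar>"
            using key[of p "a n j"] p xin j by simp
          then show "\<bar>Bernstein n j p * (g (a n j) - g p)\<bar> \<le> Bernstein n j p * (r/2 + 2*M/d * \<bar>p - a n j\<bar>)"
            using B0 by (simp add: abs_mult mult_left_mono)
        qed
        also have "\<dots> = r/2 * (\<Sum>j\<le>n. Bernstein n j p) + 2*M/d * (\<Sum>j\<le>n. Bernstein n j p * \<bar>p - a n j\<bar>)"
          unfolding sum_distrib_left sum.distrib[symmetric] by (rule sum.cong) (simp_all add: algebra_simps)
        also have "\<dots> \<le> r/2 + 2*M/d * (1 / sqrt n)"
        proof -
          have "0 \<le> 2*M/d" using M0 d by simp
          then have "2*M/d * (\<Sum>j\<le>n. Bernstein n j p * \<bar>p - a n j\<bar>) \<le> 2*M/d * (1 / sqrt n)"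
            by (rule mult_left_mono[OF minimizer_bound[OF n1 mn p]])
          then show ?thesis by simp
        qed
        finally show ?thesis .
      qed
      have "norm (integral {0..1} F - integral {0..1} g) = norm (integral {0..1} (\<lambda>p. F p - g p))"
        using integral_diff[OF Fint gint] by simp
      also have "\<dots> \<le> r/2 + 2*M/d * (1 / sqrt n)"
        using Henstock_Kurzweil_Integration.integral_norm_bound_integral[of "\<lambda>p. F p - g p" "{0..1::real}" "\<lambda>p. r/2 + 2*M/d * (1 / sqrt n)"]
        using Fint gint pw by (auto intro: integrable_diff)
      also have "\<dots> < r" using small by simp
      finally show "norm ((\<Sum>j=0..n. g (a n j)) / real (n + 1) - integral {0..1} g) < r"
        using avg by simp
    qed
  qed
qed

end
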